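(* Consider the algorithm described in the context, and suppose it does not terminate finitely. Then for all $k\ge1$, $0<\tau_k\le\tau_{k-1}$.
   Context: Problem: $\min_{x\in\mathbb{R}^n} f(x)+r(x)$ subject to $c(x)=0$, where $f:\mathbb{R}^n\to\mathbb{R}$ and $c:\mathbb{R}^n\to\mathbb{R}^m$ ($m\le n$) are continuously differentiable and $r:\mathbb{R}^n\to\mathbb{R}_{\ge 0}$ is convex. Write $g(x)=\nabla f(x)$, $J(x)=\nabla c(x)^T$, and $f_k=f(x_k)$, $g_k=g(x_k)$, $c_k=c(x_k)$, $J_k=J(x_k)$, $r_k=r(x_k)$. All norms are Euclidean. Merit function: $\Phi_\tau(x)=\tau(f(x)+r(x))+\|c(x)\|_2$. Algorithm: inputs $x_0$, $\alpha_0>0$, $\tau_{-1}>0$; constants $\kappa_v>0$, $\sigma_c,\epsilon_\tau,\xi,\eta\in(0,1)$, $\sigma_u\in(0,1/2]$, $\bar\sigma_u:=\sigma_u+\tfrac12$. For $k=0,1,\dots$: 1. If $J_k^Tc_k\ne0$, compute $v_k$ with $v_k\in\mathrm{Range}(J_k^T)$, $\|v_k\|_2\le\kappa_v\alpha_k\|J_k^Tc_k\|_2$, $\|c_k+J_kv_k\|_2\le\|c_k+J_kv_k^c\|_2$, where $v_k^c=-\beta_k^cJ_k^Tc_k$ with $\beta_k^c$ minimizing $\tfrac12\|c_k-\beta J_kJ_k^Tc_k\|_2^2$ over $0\le\beta\le\kappa_v\alpha_k$. Otherwise set $v_k=0$, and if $c_k\ne0$ terminate. 2. Let $u_k$ be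 the unique minimizer of $g_k^Tu+\tfrac1{2\alpha_k}\|u\|_2^2+r(x_k+v_k+u)$ subject to $J_ku=0$; set $s_k=v_k+u_k$. If $s_k=0$, terminate. 3. Let $D_k:=g_k^Ts_k+\bar\sigma_u\|s_k\|_2^2/\alpha_k+r(x_k+s_k)-r_k$; $\tau_{k,\mathrm{trial}}=\infty$ if $D_k\le0$, else $\tau_{k,\mathrm{trial}}=(1-\sigma_c)(\|c_k\|_2-\|c_k+J_kv_k\|_2)/D_k$. Set $\tau_k=\tau_{k-1}$ if $\tau_{k-1}\le\tau_{k,\mathrm{trial}}$, else $\tau_k=\min\{(1-\epsilon_\tau)\tau_{k-1},\tau_{k,\mathrm{trial}}\}$. 4. With $\Delta q_k(s,\tau):=-\tau(g_k^Ts+\tfrac1{2\alpha_k}\|s\|_2^2+r(x_k+s)-r_k)+\|c_k\|_2-\|c_k+J_ks\|_2$: if $\Phi_{\tau_k}(x_k+s_k)\le\Phi_{\tau_k}(x_k)-\eta\Delta q_k(s_k,\tau_k)$ set $x_{k+1}=x_k+s_k$, $\alpha_{k+1}=\alpha_k$; else $x_{k+1}=x_k$, $\alpha_{k+1}=\xi\alpha_k$. Standing assumption: there is an open convex set $\mathcal X$ containing all iterates $x_k$ and trial points $x_k+s_k$ such that $f$ is bounded below on $\mathcal X$, $\nabla f$ is bounded and Lipschitz continuous on $\mathcal X$, $c$ is bounded on $\mathcal X$, $J$ is bounded and Lipschitz continuous on $\mathcal X$, and all subgradients of $r$ at points of $\mathcal X$ are uniformly bounded in norm. *)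

theory Defs
  imports "HOL-Analysis.Analysis"
begin

definition merit :: "(real^'n \<Rightarrow> real) \<Rightarrow> (real^'n \<Rightarrow> real) \<Rightarrow> (real^'n \<Rightarrow> real^'m)
    \<Rightarrow> real \<Rightarrow> real^'n \<Rightarrow> real" where
  "merit f r c tau x = tau * (f x + r x) + norm (c x)"

definition delta_q :: "(real^'n \<Rightarrow> real^'n) \<Rightarrow> (real^'n \<Rightarrow> real) \<Rightarrow> (real^'n \<Rightarrow> real^'m)
    \<Rightarrow> (real^'n \<Rightarrow> real^'n^'m) \<Rightarrow> real^'n \<Rightarrow> real \<Rightarrow> real^'n \<Rightarrow> real \<Rightarrow> real" where
  "delta_q g r c J xk alpha s tau =
     - tau * (g xk \<bullet> s + (1 / (2 * alpha)) * (norm s)\<^sup>2 + r (xk + s) - r xk)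
     + norm (c xk) - norm (c xk + J xk *v s)"

text \<open>The quantity D_k (with bar sigma_u = sigma_u + 1/2).\<close>
definition D_val :: "(real^'n \<Rightarrow> real^'n) \<Rightarrow> (real^'n \<Rightarrow> real) \<Rightarrow> real
    \<Rightarrow> real^'n \<Rightarrow> real \<Rightarrow> real^'n \<Rightarrow> real" where
  "D_val g r sigma_u xk alpha s =
     g xk \<bullet> s + (sigma_u + 1/2) * (norm s)\<^sup>2 / alpha + r (xk + s) - r xk"

definition tau_trial :: "real \<Rightarrow> real \<Rightarrow> real \<Rightarrow> ereal" where
  "tau_trial sigma_c num D = (if D \<le> 0 then \<infinity> else ereal ((1 - sigma_c) * num / D))"

definition tau_update :: "real \<Rightarrow> real \<Rightarrow> ereal \<Rightarrow> real" where
  "tau_update eps_tau tau_prev trial =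
     (if ereal tau_prev \<le> trial then tau_prev
      else min ((1 - eps_tau) * tau_prev) (real_of_ereal trial))"

definition is_subgrad :: "(real^'n \<Rightarrow> real) \<Rightarrow> real^'n \<Rightarrow> real^'n \<Rightarrow> bool" where
  "is_subgrad r x z \<longleftrightarrow> (\<forall>y. r y \<ge> r x + z \<bullet> (y - x))"

end

theory Submission
  imports Defs "HOL-Analysis.Analysis"
begin



lemma lim_aux:
  fixes A B :: real
  assumes B: "B \<ge> 0" and H: "\<And>t. 0 \<le> t \<Longrightarrow> t < 1 \<Longrightarrow> A \<le> - (1 + t) * B"
  shows "A \<le> - 2 * B"
proof (rule ccontr)
  assume "\<not> ?thesis"
  then have d: "A + 2*B > 0" by simp
  define e where "e = (A + 2*B) / (A + 2*B + B + 1)"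
  have e0: "0 < e" "e < 1" using d B by (auto simp: e_def field_simps)
  have "e * B < A + 2*B"
  proof -
    have "e * B = (A+2*B) * (B / (A + 2*B + B + 1))" by (simp add: e_def)
    also have "\<dots> < (A+2*B) * 1" using d B by (intro mult_strict_left_mono) (auto simp: field_simps)
    finally show ?thesis by simp
  qed
  moreover have "A \<le> - (1 + (1 - e)) * B" using H[of "1-e"] e0 by simp
  ultimately show False by (simp add: algebra_simps)
qed

lemma strong_aux:
  fixes r :: "real^'n \<Rightarrow> real" and J :: "real^'n^'m"
  assumes a: "alpha > 0" and rc: "convex_on UNIV r" and Ju: "J *v u = 0"
    and opt: "\<forall>w. J *v w = 0 \<longrightarrow>
           G \<bullet> u + (1 / (2 * alpha)) * (norm u)\<^sup>2 + r (x + u)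
           \<le> G \<bullet> w + (1 / (2 * alpha)) * (norm w)\<^sup>2 + r (x + w)"
  shows "G \<bullet> u + r (x + u) - r x \<le> - 2 * ((norm u)\<^sup>2 / (2*alpha))"
proof (rule lim_aux)
  show "0 \<le> (norm u)\<^sup>2 / (2*alpha)" using a by simp
  fix t :: real assume t: "0 \<le> t" "t < 1"
  have "J *v (t *\<^sub>R u) = 0" using Ju by (simp add: matrix_vector_mult_scaleR)
  then have o: "G \<bullet> u + (1 / (2 * alpha)) * (norm u)\<^sup>2 + r (x + u)
           \<le> G \<bullet> (t *\<^sub>R u) + (1 / (2 * alpha)) * (norm (t *\<^sub>R u))\<^sup>2 + r (x + t *\<^sub>R u)"
    using opt by blast
  have "r ((1 - t) *\<^sub>R x + t *\<^sub>R (x + u)) \<le> (1 - t) * r x + t * r (x + u)"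
    using convex_onD[OF rc, of t x "x+u"] t by simp
  moreover have "(1 - t) *\<^sub>R x + t *\<^sub>R (x + u) = x + t *\<^sub>R u" by (simp add: algebra_simps)
  ultimately have rc2: "r (x + t *\<^sub>R u) \<le> (1 - t) * r x + t * r (x + u)" by simp
  have n: "(norm (t *\<^sub>R u))\<^sup>2 = t\<^sup>2 * (norm u)\<^sup>2" by (simp add: power_mult_distrib)
  define A where "A = G \<bullet> u + r (x + u) - r x"
  define B where "B = (norm u)\<^sup>2 / (2*alpha)"
  have "A + B \<le> t * A + t\<^sup>2 * B"
    using o rc2 n unfolding A_def B_def by (simp add: algebra_simps)
  then have "(1 - t) * A \<le> (1 - t) * (- (1 + t) * B)"
    by (simp add: algebra_simps power2_eq_square)
  then have "A \<le> - (1 + t) * B" using t by simp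
    thus "G \<bullet> u + r (x + u) - r x \<le> - (1 + t) * ((norm u)\<^sup>2 / (2*alpha))"  by (simp add: A_def B_def)
qed



lemma cauchy_aux:
  fixes J :: "real^'n^'m" and c :: "real^'m"
  assumes a: "transpose J *v c \<noteq> 0" and K: "K > 0" and bc: "0 \<le> bc" "bc \<le> K"
    and opt: "\<forall>beta. 0 \<le> beta \<and> beta \<le> K \<longrightarrow>
                  (1/2) * (norm (c - beta *\<^sub>R (J *v (transpose J *v c))))\<^sup>2
                  \<ge> (1/2) * (norm (c - bc *\<^sub>R (J *v (transpose J *v c))))\<^sup>2"
  shows "norm (c + J *v (- bc *\<^sub>R (transpose J *v c))) < norm c"
proof -
  define a where "a = transpose J *v c"
  define b where "b = J *v a"
  have cb: "c \<bullet> b = (norm a)\<^sup>2"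
    by (simp add: a_def b_def transpose_matrix_vector dot_lmul_matrix[symmetric] power2_norm_eq_inner)
  have na: "(norm a)\<^sup>2 > 0" using a by (simp add: a_def)
  have expand: "\<And>beta. (norm (c - beta *\<^sub>R b))\<^sup>2 = (norm c)\<^sup>2 - 2 * beta * (norm a)\<^sup>2 + beta\<^sup>2 * (norm b)\<^sup>2"
  proof -
    fix beta :: real
    have "(norm (c - beta *\<^sub>R b))\<^sup>2 = (c - beta *\<^sub>R b) \<bullet> (c - beta *\<^sub>R b)" by (rule power2_norm_eq_inner)
    also have "\<dots> = c \<bullet> c - 2 * beta * (c \<bullet> b) + beta\<^sup>2 * (b \<bullet> b)"
      by (simp add: inner_diff_left inner_diff_right inner_commute power2_eq_square algebra_simps)
    finally show "(norm (c - beta *\<^sub>R b))\<^sup>2 = (norm c)\<^sup>2 - 2 * beta * (norm a)\<^sup>2 + beta\<^sup>2 * (norm b)\<^sup>2"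
      by (simp add: cb power2_norm_eq_inner)
  qed
  define beta where "beta = min K ((norm a)\<^sup>2 / ((norm b)\<^sup>2 + 1))"
  have pb: "(norm b)\<^sup>2 + 1 > 0" by (simp add: add_nonneg_pos)
  then have q: "(norm a)\<^sup>2 / ((norm b)\<^sup>2 + 1) > 0" using na by (intro divide_pos_pos)
  then have b0: "0 < beta" using K by (simp add: beta_def)
  have b1: "beta * (norm b)\<^sup>2 < 2 * (norm a)\<^sup>2"
  proof -
    have "beta * (norm b)\<^sup>2 \<le> ((norm a)\<^sup>2 / ((norm b)\<^sup>2 + 1)) * (norm b)\<^sup>2"
      by (intro mult_right_mono) (auto simp: beta_def)
    also have "\<dots> < (norm a)\<^sup>2 / ((norm b)\<^sup>2 + 1) * ((norm b)\<^sup>2 + 1)"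
      using q by (intro mult_strict_left_mono) auto
    also have "\<dots> = (norm a)\<^sup>2" using pb by simp
    finally show ?thesis using na by linarith
  qed
  have "(norm (c - beta *\<^sub>R b))\<^sup>2 < (norm c)\<^sup>2"
  proof -
    have "beta * (beta * (norm b)\<^sup>2) < beta * (2 * (norm a)\<^sup>2)" using b0 b1 by simp
    then show ?thesis unfolding expand by (simp add: power2_eq_square algebra_simps)
  qed
  moreover have "(norm (c - bc *\<^sub>R b))\<^sup>2 \<le> (norm (c - beta *\<^sub>R b))\<^sup>2"
    using opt[rule_format, of beta] b0 K by (simp add: beta_def a_def b_def)
  ultimately have "(norm (c - bc *\<^sub>R b))\<^sup>2 < (norm c)\<^sup>2" by linarith
  then have "norm (c - bc *\<^sub>R b) < norm c" by (simp add: power_less_imp_less_base)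
  moreover have "J *v (- bc *\<^sub>R a) = (- bc) *\<^sub>R b" by (simp only: matrix_vector_mult_scaleR b_def)
  then have "c + J *v (- bc *\<^sub>R a) = c - bc *\<^sub>R b" by simp
  ultimately show ?thesis by (simp add: a_def)
qed

lemma upd_aux:
  assumes p: "prev > 0" and tr: "trial = \<infinity> \<or> (\<exists>t>0. trial = ereal t)"
    and e: "0 < eps" "eps < 1"
  shows "0 < tau_update eps prev trial \<and> tau_update eps prev trial \<le> prev"
  using tr
proof
  assume "trial = \<infinity>" then show ?thesis using p by (simp add: tau_update_def)
next
  assume "\<exists>t>0. trial = ereal t"
  then obtain t where t: "t > 0" "trial = ereal t" by blast
  have "(1 - eps) * prev > 0" using p e by simp
  moreover have "(1 - eps) * prev \<le> prev" using p e by (simp add: algebra_simps)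
  ultimately show ?thesis using p t by (auto simp: tau_update_def min_def)
qed

theorem lemma3p8:
  fixes f :: "real^'n \<Rightarrow> real" and g :: "real^'n \<Rightarrow> real^'n"
    and c :: "real^'n \<Rightarrow> real^'m" and J :: "real^'n \<Rightarrow> real^'n^'m"
    and r :: "real^'n \<Rightarrow> real"
    and x v u :: "nat \<Rightarrow> real^'n" and alpha tau :: "nat \<Rightarrow> real"
    and tau_m1 kappa_v sigma_c eps_tau xi eta sigma_u :: real
  assumes m_le_n: "CARD('m) \<le> CARD('n)"
    and f_deriv: "\<And>y. (f has_derivative (\<lambda>h. g y \<bullet> h)) (at y)"
    and g_cont: "continuous_on UNIV g"
    and c_deriv: "\<And>y. (c has_derivative (\<lambda>h. J y *v h)) (at y)"
    and J_cont: "continuous_on UNIV J"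
    and r_convex: "convex_on UNIV r"
    and r_nonneg: "\<And>y. r y \<ge> 0"
    and alpha0: "alpha 0 > 0"
    and tau_m1_pos: "tau_m1 > 0"
    and kappa_v: "kappa_v > 0"
    and sigma_c: "0 < sigma_c" "sigma_c < 1"
    and eps_tau: "0 < eps_tau" "eps_tau < 1"
    and xi: "0 < xi" "xi < 1"
    and eta: "0 < eta" "eta < 1"
    and sigma_u: "0 < sigma_u" "sigma_u \<le> 1/2"
    and standing: "\<exists>X. open X \<and> convex X
        \<and> (\<forall>k. x k \<in> X \<and> x k + (v k + u k) \<in> X)
        \<and> bdd_below (f ` X)
        \<and> bounded (g ` X) \<and> (\<exists>L. \<forall>y\<in>X. \<forall>z\<in>X. norm (g y - g z) \<le> L * norm (y - z))
        \<and> bounded (c ` X)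
        \<and> bounded (J ` X) \<and> (\<exists>L. \<forall>y\<in>X. \<forall>z\<in>X. norm (J y - J z) \<le> L * norm (y - z))
        \<and> (\<exists>G. \<forall>y\<in>X. \<forall>w. is_subgrad r y w \<longrightarrow> norm w \<le> G)"
    and step1_nz: "\<And>k. transpose (J (x k)) *v c (x k) \<noteq> 0 \<Longrightarrow>
        (\<exists>w. v k = transpose (J (x k)) *v w)
        \<and> norm (v k) \<le> kappa_v * alpha k * norm (transpose (J (x k)) *v c (x k))
        \<and> (\<exists>beta_c. 0 \<le> beta_c \<and> beta_c \<le> kappa_v * alpha k
             \<and> (\<forall>beta. 0 \<le> beta \<and> beta \<le> kappa_v * alpha k \<longrightarrow>
                  (1/2) * (norm (c (x k) - beta *\<^sub>R (J (x k) *v (transpose (J (x k)) *v c (x k)))))\<^sup>2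
                  \<ge> (1/2) * (norm (c (x k) - beta_c *\<^sub>R (J (x k) *v (transpose (J (x k)) *v c (x k)))))\<^sup>2)
             \<and> norm (c (x k) + J (x k) *v v k)
                 \<le> norm (c (x k) + J (x k) *v (- beta_c *\<^sub>R (transpose (J (x k)) *v c (x k)))))"
    and step1_z: "\<And>k. transpose (J (x k)) *v c (x k) = 0 \<Longrightarrow> v k = 0"
    and no_term1: "\<And>k. transpose (J (x k)) *v c (x k) = 0 \<Longrightarrow> c (x k) = 0"
    and step2: "\<And>k. J (x k) *v u k = 0 \<and>
        (\<forall>w. J (x k) *v w = 0 \<longrightarrow>
           g (x k) \<bullet> u k + (1 / (2 * alpha k)) * (norm (u k))\<^sup>2 + r (x k + v k + u k)
           \<le> g (x k) \<bullet> w + (1 / (2 * alpha k)) * (norm w)\<^sup>2 + r (x k + v k + w))"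
    and no_term2: "\<And>k. v k + u k \<noteq> 0"
    and step3: "\<And>k. tau k = tau_update eps_tau (if k = 0 then tau_m1 else tau (k - 1))
        (tau_trial sigma_c (norm (c (x k)) - norm (c (x k) + J (x k) *v v k))
           (D_val g r sigma_u (x k) (alpha k) (v k + u k)))"
    and step4: "\<And>k. (merit f r c (tau k) (x k + (v k + u k))
                  \<le> merit f r c (tau k) (x k) - eta * delta_q g r c J (x k) (alpha k) (v k + u k) (tau k)
                 \<longrightarrow> x (Suc k) = x k + (v k + u k) \<and> alpha (Suc k) = alpha k)
        \<and> (\<not> merit f r c (tau k) (x k + (v k + u k))
                  \<le> merit f r c (tau k) (x k) - eta * delta_q g r c J (x k) (alpha k) (v k + u k) (tau k)
                 \<longrightarrow> x (Suc k) = x k \<and> alpha (Suc k) = xi * alpha k)"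
  shows "\<forall>k\<ge>1. 0 < tau k \<and> tau k \<le> tau (k - 1)"
  proof -
  have apos: "\<And>k. alpha k > 0"
  proof -
    fix k show "alpha k > 0"
    proof (induction k)
      case 0 then show ?case using alpha0 by simp
    next
      case (Suc k) then show ?case using step4[of k] xi by (cases "merit f r c (tau k) (x k + (v k + u k))
                  \<le> merit f r c (tau k) (x k) - eta * delta_q g r c J (x k) (alpha k) (v k + u k) (tau k)") auto
    qed
  qed
  have trial: "\<And>k. tau_trial sigma_c (norm (c (x k)) - norm (c (x k) + J (x k) *v v k))
           (D_val g r sigma_u (x k) (alpha k) (v k + u k)) = \<infinity> \<or>
        (\<exists>t>0. tau_trial sigma_c (norm (c (x k)) - norm (c (x k) + J (x k) *v v k))
           (D_val g r sigma_u (x k) (alpha k) (v k + u k)) = ereal t)"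
  proof -
    fix k
    show "?thesis k"
    proof (cases "transpose (J (x k)) *v c (x k) = 0")
      case True
      then have v0: "v k = 0" and c0: "c (x k) = 0" using step1_z no_term1 by auto
      have opt: "\<forall>w. J (x k) *v w = 0 \<longrightarrow>
           g (x k) \<bullet> u k + (1 / (2 * alpha k)) * (norm (u k))\<^sup>2 + r (x k + u k)
           \<le> g (x k) \<bullet> w + (1 / (2 * alpha k)) * (norm w)\<^sup>2 + r (x k + w)"
        using step2[of k] v0 by simp
      have sa: "g (x k) \<bullet> u k + r (x k + u k) - r (x k) \<le> - 2 * ((norm (u k))\<^sup>2 / (2 * alpha k))"
        by (rule strong_aux[OF apos r_convex _ opt]) (use step2[of k] in blast)
      have "(sigma_u + 1/2) * (norm (u k))\<^sup>2 / alpha k \<le> (norm (u k))\<^sup>2 / alpha k"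
        using sigma_u apos[of k] by (intro divide_right_mono mult_left_le_one_le) auto
      moreover have "- 2 * ((norm (u k))\<^sup>2 / (2 * alpha k)) = - ((norm (u k))\<^sup>2 / alpha k)"
        by simp
      ultimately have "D_val g r sigma_u (x k) (alpha k) (v k + u k) \<le> 0"
        using sa v0 unfolding D_val_def by simp
      then show ?thesis by (simp add: tau_trial_def)
    next
      case False
      from step1_nz[OF False] obtain bc where bc: "0 \<le> bc" "bc \<le> kappa_v * alpha k"
        and bopt: "\<forall>beta. 0 \<le> beta \<and> beta \<le> kappa_v * alpha k \<longrightarrow>
                  (1/2) * (norm (c (x k) - beta *\<^sub>R (J (x k) *v (transpose (J (x k)) *v c (x k)))))\<^sup>2
                  \<ge> (1/2) * (norm (c (x k) - bc *\<^sub>R (J (x k) *v (transpose (J (x k)) *v c (x k)))))\<^sup>2"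
        and vle: "norm (c (x k) + J (x k) *v v k)
                 \<le> norm (c (x k) + J (x k) *v (- bc *\<^sub>R (transpose (J (x k)) *v c (x k))))"
        by blast
      have K: "kappa_v * alpha k > 0" using kappa_v apos[of k] by simp
      have "norm (c (x k) + J (x k) *v (- bc *\<^sub>R (transpose (J (x k)) *v c (x k)))) < norm (c (x k))"
        by (rule cauchy_aux[OF False K bc bopt])
      then have num: "norm (c (x k)) - norm (c (x k) + J (x k) *v v k) > 0" using vle by linarith
      show ?thesis
      proof (cases "D_val g r sigma_u (x k) (alpha k) (v k + u k) \<le> 0")
        case True then show ?thesis by (simp add: tau_trial_def)
      next
        case F2: False
        have "(1 - sigma_c) * (norm (c (x k)) - norm (c (x k) + J (x k) *v v k))
              / D_val g r sigma_u (x k) (alpha k) (v k + u k) > 0"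
          using num F2 sigma_c by (intro divide_pos_pos mult_pos_pos) auto
        then show ?thesis using F2 by (auto simp: tau_trial_def)
      qed
    qed
  qed
  have main: "\<And>k. 0 < tau k \<and> tau k \<le> (if k = 0 then tau_m1 else tau (k - 1))"
  proof -
    fix k show "0 < tau k \<and> tau k \<le> (if k = 0 then tau_m1 else tau (k - 1))"
    proof (induction k)
      case 0 show ?case using upd_aux[OF tau_m1_pos trial[of 0] eps_tau] step3[of 0] by simp
    next
      case (Suc k)
      have "tau k > 0" using Suc by simp
      then show ?case using upd_aux[OF _ trial[of "Suc k"] eps_tau] step3[of "Suc k"] by simp
    qed
  qed
  show ?thesis
  proof (intro allI impI)
    fix k :: nat assume "k \<ge> 1"
    then show "0 < tau k \<and> tau k \<le> tau (k - 1)" using main[of k] by simp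
  qed
qed

end
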